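(* Let $\mathcal{F}$ be a linear $3$-uniform family with $\Delta(\mathcal{F})=d$ and $\nu(\mathcal{F})=\nu$. Then $|\mathcal{F}|\leq \max\{2d\nu,10\nu\}$.
   Context: A family $\mathcal{F}$ is a finite collection of distinct subsets of a vertex set. It is $3$-uniform if every member has exactly $3$ elements, and linear if $|A\cap B|\leq 1$ for all distinct $A,B\in\mathcal{F}$. A matching is a collection of pairwise disjoint members; $\nu(\mathcal{F})$ is the maximum size of a matching. For a vertex $x$, $\mathcal{F}_x=\{A\in\mathcal{F}:x\in A\}$ and $\Delta(\mathcal{F})=\max_x|\mathcal{F}_x|$. *)

theory Defs
  imports Main
begin

definition uniform3 :: "'a set set \<Rightarrow> bool" where
  "uniform3 F \<longleftrightarrow> (\<forall>A\<in>F. card A = 3)"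

definition linear_family :: "'a set set \<Rightarrow> bool" where
  "linear_family F \<longleftrightarrow> (\<forall>A\<in>F. \<forall>B\<in>F. A \<noteq> B \<longrightarrow> card (A \<inter> B) \<le> 1)"

definition is_matching :: "'a set set \<Rightarrow> 'a set set \<Rightarrow> bool" where
  "is_matching F M \<longleftrightarrow> M \<subseteq> F \<and> (\<forall>A\<in>M. \<forall>B\<in>M. A \<noteq> B \<longrightarrow> A \<inter> B = {})"

text \<open>Matching number: maximum size of a matching (F is finite, so this is a max).\<close>
definition matching_number :: "'a set set \<Rightarrow> nat" where
  "matching_number F = Max {card M | M. is_matching F M}"

definition star :: "'a set set \<Rightarrow> 'a \<Rightarrow> 'a set set" where
  "star F x = {A \<in> F. x \<in> A}"

text \<open>Maximum degree: max over vertices (only vertices in some member matter; 0 for empty family).\<close>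
definition max_degree :: "'a set set \<Rightarrow> nat" where
  "max_degree F = Max ({0} \<union> {card (star F x) | x. x \<in> \<Union>F})"

end

theory Submission
  imports Defs Complex_Main
begin

lemma card_ge2: "finite S \<Longrightarrow> v \<in> S \<Longrightarrow> S \<noteq> {v} \<Longrightarrow> 2 \<le> card S"
proof -
  assume a: "finite S" "v \<in> S" "S \<noteq> {v}"
  then obtain u where "u \<in> S" "u \<noteq> v" by blast
  then have "{u,v} \<subseteq> S" using a by auto
  then have "card {u,v} \<le> card S" using a by (intro card_mono) auto
  thus ?thesis using \<open>u \<noteq> v\<close> by simp
qed

lemma arith3:
  fixes pa ra pb rb pc rc d wa wb wc :: real
  assumes "wa \<le> 1/3 + pa + ra/2" "wb \<le> 1/3 + pb + rb/2" "wc \<le> 1/3 + pc + rc/2"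
    "pa + ra + 1 \<le> d" "pb + rb + 1 \<le> d" "pc + rc + 1 \<le> d"
    "pa \<ge> 0" "pb \<ge> 0" "pc \<ge> 0" "ra \<ge> 0" "rb \<ge> 0" "rc \<ge> 0"
    "pb > 0 \<Longrightarrow> pa \<le> 2" "pc > 0 \<Longrightarrow> pa \<le> 2"
    "pa > 0 \<Longrightarrow> pb \<le> 2" "pc > 0 \<Longrightarrow> pb \<le> 2"
    "pa > 0 \<Longrightarrow> pc \<le> 2" "pb > 0 \<Longrightarrow> pc \<le> 2"
  shows "wa + wb + wc \<le> max (2 * d) 10"
proof -
  define Mx where "Mx = max (2 * d) 10"
  have m: "2 * d \<le> Mx" "10 \<le> Mx" unfolding Mx_def by auto
  have c: "(pb=0 \<and> pc=0) \<or> (pa=0 \<and> pc=0) \<or> (pa=0 \<and> pb=0) \<or> (pa\<le>2 \<and> pb\<le>2 \<and> pc\<le>2)"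
  proof (cases "pa > 0"; cases "pb > 0"; cases "pc > 0")
  qed (use assms(7-18) in auto)
  have "wa + wb + wc \<le> Mx"
  proof -
    { assume "pb=0 \<and> pc=0"
      hence ?thesis using assms(1-6,10-12) m by linarith }
    moreover
    { assume "pa=0 \<and> pc=0"
      hence ?thesis using assms(1-6,10-12) m by linarith }
    moreover
    { assume "pa=0 \<and> pb=0"
      hence ?thesis using assms(1-6,10-12) m by linarith }
    moreover
    { assume h: "pa\<le>2 \<and> pb\<le>2 \<and> pc\<le>2"
      have ?thesis
      proof (cases "d \<le> 5")
        case True
        thus ?thesis using h assms(1-6) m by linarith
      next
        case False
        thus ?thesis using h assms(1-6) m by linarith
      qed }
    ultimately show ?thesis using c by blast
  qed
  thus ?thesis unfolding Mx_def .
qed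

locale lin3 =
  fixes F :: "'a set set" and M :: "'a set set" and \<nu> :: nat
  assumes fin: "finite F" and uni: "uniform3 F" and lin: "linear_family F"
  and match: "is_matching F M" and cardM: "card M = \<nu>"
  and maxm: "\<And>M'. is_matching F M' \<Longrightarrow> card M' \<le> \<nu>"
begin

definition V where "V = \<Union>M"
definition P where "P v = {E\<in>F. E \<inter> V = {v}}"

lemma MF: "M \<subseteq> F" using match unfolding is_matching_def by auto
lemma Mdisj: "A \<in> M \<Longrightarrow> B \<in> M \<Longrightarrow> A \<noteq> B \<Longrightarrow> A \<inter> B = {}"
  using match unfolding is_matching_def by auto
lemma c3: "E \<in> F \<Longrightarrow> card E = 3" using uni unfolding uniform3_def by auto
lemma finE: "E \<in> F \<Longrightarrow> finite E" using c3 by (metis card.infinite zero_neq_numeral)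
lemma finM: "finite M" using MF fin finite_subset by auto
lemma finV: "finite V" unfolding V_def using finM MF finE by auto
lemma linE: "A \<in> F \<Longrightarrow> B \<in> F \<Longrightarrow> A \<noteq> B \<Longrightarrow> card (A \<inter> B) \<le> 1"
  using lin unfolding linear_family_def by auto

lemma hitV: "E \<in> F \<Longrightarrow> E \<inter> V \<noteq> {}"
proof
  assume E: "E \<in> F" "E \<inter> V = {}"
  have "E \<noteq> {}" using c3[OF E(1)] by auto
  hence nM: "E \<notin> M" using E unfolding V_def by auto
  have "is_matching F (insert E M)" using match E unfolding is_matching_def V_def by blast
  hence "card (insert E M) \<le> \<nu>" by (rule maxm)
  moreover have "card (insert E M) = \<nu> + 1" using nM finM cardM by simp
  ultimately show False by simp
qed

lemma PnotM: "E \<in> P v \<Longrightarrow> E \<notin> M"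
proof
  assume a: "E \<in> P v" "E \<in> M"
  hence "E \<subseteq> V" unfolding V_def by auto
  hence "E = {v}" using a unfolding P_def by auto
  moreover have "card E = 3" using a c3 unfolding P_def by auto
  ultimately show False by simp
qed

lemma aug:
  assumes A: "A \<in> M" and ab: "a \<in> A" "b \<in> A" "a \<noteq> b"
    and Ea: "Ea \<in> P a" and Eb: "Eb \<in> P b"
  shows "Ea \<inter> Eb \<noteq> {}"
proof
  assume dis: "Ea \<inter> Eb = {}"
  have aV: "a \<in> V" "b \<in> V" using A ab unfolding V_def by auto
  have EaF: "Ea \<in> F" "Ea \<inter> V = {a}" using Ea unfolding P_def by auto
  have EbF: "Eb \<in> F" "Eb \<inter> V = {b}" using Eb unfolding P_def by auto
  have ne: "Ea \<noteq> Eb" using EaF EbF ab by auto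
  let ?M = "insert Ea (insert Eb (M - {A}))"
  have dB: "E \<inter> B = {}" if "E \<inter> V = {x}" "x \<in> A" "B \<in> M - {A}" for E B x
  proof -
    have "B \<subseteq> V" using that unfolding V_def by auto
    hence "E \<inter> B \<subseteq> {x}" using that by auto
    moreover have "x \<notin> B" using that Mdisj[OF A, of B] by auto
    ultimately show ?thesis by auto
  qed
  have "is_matching F ?M"
    unfolding is_matching_def
  proof (intro conjI ballI impI)
    show "?M \<subseteq> F" using MF EaF EbF by auto
  next
    fix X Y assume XY: "X \<in> ?M" "Y \<in> ?M" "X \<noteq> Y"
    have s1: "Ea \<inter> B = {}" if "B \<in> M - {A}" for B using dB[OF EaF(2) ab(1) that] .
    have s2: "Eb \<inter> B = {}" if "B \<in> M - {A}" for B using dB[OF EbF(2) ab(2) that] .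
    have "X = Ea \<or> X = Eb \<or> X \<in> M - {A}" "Y = Ea \<or> Y = Eb \<or> Y \<in> M - {A}" using XY by auto
    then show "X \<inter> Y = {}" using XY(3)
      by (elim disjE; simp add: dis s1 s2 Int_commute Mdisj)
  qed
  hence "card ?M \<le> \<nu>" by (rule maxm)
  moreover have "card ?M = \<nu> + 1"
  proof -
    have "\<nu> \<ge> 1" using A finM cardM by (metis card_0_eq empty_iff less_one not_le)
    have "card (M - {A}) = \<nu> - 1" using A finM cardM by simp
    moreover have "Eb \<notin> M - {A}" "Ea \<notin> insert Eb (M - {A})" using PnotM Ea Eb ne by auto
    ultimately show ?thesis using finM \<open>\<nu> \<ge> 1\<close> by simp
  qed
  ultimately show False by simp
qed

lemma Pbound:
  assumes A: "A \<in> M" and ab: "a \<in> A" "b \<in> A" "a \<noteq> b" and ne: "P b \<noteq> {}"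
  shows "card (P a) \<le> 2"
proof -
  obtain Eb where Eb: "Eb \<in> P b" using ne by auto
  have aV: "a \<in> V" "b \<in> V" using A ab unfolding V_def by auto
  have EbF: "Eb \<in> F" "Eb \<inter> V = {b}" using Eb unfolding P_def by auto
  define f where "f E = (SOME x. x \<in> E \<inter> Eb)" for E
  have fE: "f E \<in> E \<inter> Eb" if "E \<in> P a" for E
    using aug[OF A ab that Eb] unfolding f_def by (metis ex_in_conv someI_ex)
  have "f ` P a \<subseteq> Eb - {b}"
  proof
    fix y assume "y \<in> f ` P a"
    then obtain E where E: "E \<in> P a" "y = f E" by auto
    have "y \<in> E" "y \<in> Eb" using fE[OF E(1)] E by auto
    moreover have "y \<noteq> b" using E(1) \<open>y \<in> E\<close> aV ab unfolding P_def by auto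
    ultimately show "y \<in> Eb - {b}" by auto
  qed
  moreover have "inj_on f (P a)"
  proof
    fix E E' assume EE: "E \<in> P a" "E' \<in> P a" "f E = f E'"
    show "E = E'"
    proof (rule ccontr)
      assume "E \<noteq> E'"
      have F: "E \<in> F" "E' \<in> F" using EE unfolding P_def by auto
      have "a \<in> E" "a \<in> E'" using EE unfolding P_def by auto
      moreover have "f E \<in> E" "f E \<in> E'" "f E \<in> Eb" using fE EE by (metis IntD1 IntD2)+
      moreover have "a \<notin> Eb" using EbF aV ab by auto
      ultimately have "{a, f E} \<subseteq> E \<inter> E'" "a \<noteq> f E" by auto
      hence "card {a, f E} \<le> card (E \<inter> E')" using finE F by (intro card_mono) auto
      thus False using linE[OF F \<open>E \<noteq> E'\<close>] \<open>a \<noteq> f E\<close> by simp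
    qed
  qed
  ultimately have "card (P a) \<le> card (Eb - {b})"
    using finE EbF by (intro card_inj_on_le) auto
  also have "\<dots> = 2" using c3[OF EbF(1)] EbF by (subst card_Diff_singleton) auto
  finally show ?thesis .
qed

definition w where "w v = (\<Sum>E\<in>star F v. 1 / real (card (E \<inter> V)))"
definition R where "R A v = star F v - {A} - P v"

lemma finstar: "finite (star F v)" using fin unfolding star_def by auto

lemma wbound:
  assumes A: "A \<in> M" and v: "v \<in> A"
  shows "w v \<le> 1/3 + real (card (P v)) + real (card (R A v)) / 2"
    and "card (P v) + card (R A v) + 1 = card (star F v)"
proof -
  have AF: "A \<in> F" using A MF by auto
  have AV: "A \<subseteq> V" using A unfolding V_def by auto
  have vV: "v \<in> V" using AV v by auto
  have Ast: "A \<in> star F v" using AF v unfolding star_def by auto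
  have AP: "A \<notin> P v" using PnotM A by auto
  have Pst: "P v \<subseteq> star F v" unfolding P_def star_def by auto
  have st: "star F v = insert A (P v \<union> R A v)" using Ast Pst unfolding R_def by auto
  have finP: "finite (P v)" using Pst finstar finite_subset by auto
  have finR: "finite (R A v)" using finstar unfolding R_def by auto
  have disj: "P v \<inter> R A v = {}" "A \<notin> P v \<union> R A v" using AP unfolding R_def by auto
  let ?f = "\<lambda>E. 1 / real (card (E \<inter> V))"
  have "w v = ?f A + (sum ?f (P v) + sum ?f (R A v))"
    unfolding w_def st using finP finR disj
    by (simp add: sum.union_disjoint)
  moreover have "?f A = 1/3" using AV c3[OF AF] by (simp add: Int_absorb2)
  moreover have "sum ?f (P v) = real (card (P v))"
  proof -
    have "sum ?f (P v) = (\<Sum>E\<in>P v. 1)" by (rule sum.cong) (auto simp: P_def)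
    thus ?thesis by simp
  qed
  moreover have "sum ?f (R A v) \<le> real (card (R A v)) * (1/2)"
  proof (rule sum_bounded_above)
    fix E assume E: "E \<in> R A v"
    hence EF: "E \<in> F" "v \<in> E" "E \<inter> V \<noteq> {v}" unfolding R_def star_def P_def by auto
    have "2 \<le> card (E \<inter> V)" using EF vV finE[OF EF(1)] by (intro card_ge2) auto
    thus "?f E \<le> 1/2" by (simp add: divide_simps)
  qed
  ultimately show "w v \<le> 1/3 + real (card (P v)) + real (card (R A v)) / 2" by simp
  show "card (P v) + card (R A v) + 1 = card (star F v)"
    unfolding st using finP finR disj by (simp add: card_Un_disjoint)
qed

lemma count: "real (card F) = (\<Sum>v\<in>V. w v)"
proof -
  have "real (card F) = (\<Sum>E\<in>F. \<Sum>v\<in>{v. v \<in> V \<and> v \<in> E}. 1 / real (card (E \<inter> V)))"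
  proof -
    have h1: "(\<Sum>v\<in>{v. v \<in> V \<and> v \<in> E}. 1 / real (card (E \<inter> V))) = 1" if "E \<in> F" for E
    proof -
      have eq: "{v. v \<in> V \<and> v \<in> E} = E \<inter> V" by auto
      have "card (E \<inter> V) \<noteq> 0" using hitV[OF that] finV by auto
      thus ?thesis unfolding eq by simp
    qed
    hence "(\<Sum>E\<in>F. \<Sum>v\<in>{v. v \<in> V \<and> v \<in> E}. 1 / real (card (E \<inter> V))) = (\<Sum>E\<in>F. 1)"
      using h1 by (intro sum.cong refl) blast
    thus ?thesis by simp
  qed
  also have "\<dots> = (\<Sum>v\<in>V. \<Sum>E\<in>{E. E \<in> F \<and> v \<in> E}. 1 / real (card (E \<inter> V)))"
    by (rule sum.swap_restrict[OF fin finV])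
  also have "\<dots> = (\<Sum>v\<in>V. w v)" unfolding w_def star_def by simp
  finally show ?thesis .
qed

lemma count2: "(\<Sum>v\<in>V. w v) = (\<Sum>A\<in>M. \<Sum>v\<in>A. w v)"
  unfolding V_def using sum.Union_disjoint[of M w] finE MF Mdisj by auto

lemma localbound:
  assumes A: "A \<in> M" and dB: "\<And>x. card (star F x) \<le> d"
  shows "(\<Sum>v\<in>A. w v) \<le> max (2 * real d) 10"
proof -
  have AF: "A \<in> F" using A MF by auto
  obtain a b c where abc: "A = {a,b,c}" "a \<noteq> b" "b \<noteq> c" "a \<noteq> c"
    using c3[OF AF] card_3_iff by metis
  have inA: "a \<in> A" "b \<in> A" "c \<in> A" using abc by auto
  have finP: "finite (P v)" for v using fin unfolding P_def by auto
  have pb: "card (P x) > 0 \<Longrightarrow> card (P y) \<le> 2" if "x \<in> A" "y \<in> A" "x \<noteq> y" for x y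
    using Pbound[OF A that(2,1)] that finP by fastforce
  have sum: "(\<Sum>v\<in>A. w v) = w a + w b + w c" using abc by simp
  have nd: "real (card (P v)) + real (card (R A v)) + 1 \<le> real d" if "v \<in> A" for v
  proof -
    have "card (P v) + card (R A v) + 1 \<le> d" using wbound(2)[OF A that] dB[of v] by simp
    thus ?thesis by linarith
  qed
  have q: "real (card (P x)) > 0 \<Longrightarrow> real (card (P y)) \<le> 2" if "x \<in> A" "y \<in> A" "x \<noteq> y" for x y
    using pb[OF that] by simp
  have ne: "b \<noteq> a" "c \<noteq> a" "c \<noteq> b" using abc by auto
  show ?thesis unfolding sum
    by (rule arith3[OF wbound(1)[OF A inA(1)] wbound(1)[OF A inA(2)] wbound(1)[OF A inA(3)]
       nd[OF inA(1)] nd[OF inA(2)] nd[OF inA(3)] of_nat_0_le_iff of_nat_0_le_iff of_nat_0_le_iff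
       of_nat_0_le_iff of_nat_0_le_iff of_nat_0_le_iff
       q[OF inA(2) inA(1) ne(1)] q[OF inA(3) inA(1) ne(2)]
       q[OF inA(1) inA(2) abc(2)] q[OF inA(3) inA(2) ne(3)]
       q[OF inA(1) inA(3) abc(4)] q[OF inA(2) inA(3) abc(3)]])
qed

end

theorem theorem3:
  fixes F :: "'a set set" and d \<nu> :: nat
  assumes "finite F"
    and "uniform3 F"
    and "linear_family F"
    and "max_degree F = d"
    and "matching_number F = \<nu>"
  shows "card F \<le> max (2 * d * \<nu>) (10 * \<nu>)"
proof -
  let ?S = "{card M | M. is_matching F M}"
  have Ssub: "?S \<subseteq> {0..card F}"
    using assms(1) unfolding is_matching_def by (auto intro: card_mono)
  hence finS: "finite ?S" using finite_subset by blast
  have "is_matching F {}" unfolding is_matching_def by auto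
  hence neS: "?S \<noteq> {}" by blast
  have "Max ?S \<in> ?S" using Max_in[OF finS neS] .
  then obtain M where M: "is_matching F M" "card M = \<nu>"
    using assms(5) unfolding matching_number_def by auto
  have maxm: "card M' \<le> \<nu>" if "is_matching F M'" for M'
    using Max_ge[OF finS] that assms(5) unfolding matching_number_def by blast
  interpret L: lin3 F M \<nu> using assms(1-3) M maxm by unfold_locales auto
  have dB: "card (star F x) \<le> d" for x
  proof (cases "x \<in> \<Union>F")
    case True
    let ?D = "{0} \<union> {card (star F x) | x. x \<in> \<Union>F}"
    have "?D \<subseteq> {0..card F}" using assms(1) unfolding star_def by (auto intro: card_mono)
    hence "finite ?D" using finite_subset by blast
    moreover have "card (star F x) \<in> ?D" using True by blast
    ultimately have "card (star F x) \<le> Max ?D" by (rule Max_ge)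
    thus ?thesis using assms(4) unfolding max_degree_def by simp
  next
    case False
    hence "star F x = {}" unfolding star_def by auto
    thus ?thesis by simp
  qed
  have "real (card F) = (\<Sum>A\<in>M. \<Sum>v\<in>A. L.w v)" using L.count L.count2 by simp
  also have "\<dots> \<le> (\<Sum>A\<in>M. max (2 * real d) 10)"
    by (rule sum_mono) (rule L.localbound[OF _ dB])
  also have "\<dots> = real \<nu> * max (2 * real d) 10" using M by simp
  also have "\<dots> = real (max (2 * d * \<nu>) (10 * \<nu>))"
  proof (cases "2 * d \<le> 10")
    case True
    hence "2 * d * \<nu> \<le> 10 * \<nu>" by simp
    thus ?thesis using True by (simp add: max_def)
  next
    case False
    hence "10 * \<nu> \<le> 2 * d * \<nu>" by simp
    thus ?thesis using False by (simp add: max_def)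
  qed
  finally show ?thesis by linarith
qed

end
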